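(* With notation as in the context (type $E_7$), let $x_1,x_2\in\Gamma_7^+$ with $x_1\neq x_2$. If $(x_1|x_2)=0$, then there exists a unique $x_3\in\Gamma_7^+\setminus\{x_1,x_2\}$ such that $(x_1|x_3)=(x_2|x_3)=0$; moreover this $x_3$ satisfies $x_1\oplus x_2\oplus x_3=000$. Conversely, if $x_1\oplus x_2\in\Gamma_7^+$, then $(x_1|x_2)=0$.
   Context: Let $F=\{0,1,2,3\}$ be the group $\mathbb{Z}/2\times\mathbb{Z}/2$ with operation $\oplus$ (binary addition without carry) and symplectic form $(a|a')=0$ if $a=0$, $a'=0$ or $a=a'$, and $1$ otherwise. Let $V=F^3$ (elements written $abc$), with coordinatewise $\oplus$ and form $(abc|a'b'c')=(a|a')+(b|b')+(c|c')\in\mathbb{Z}/2$. Let $\Delta$ be the $E_7$ root system with simple roots $\alpha_1,\dots,\alpha_7$, $\langle\alpha_i,\alpha_i\rangle=2$, $\langle\alpha_i,\alpha_j\rangle=-1$ for $\{i,j\}\in\{\{1,3\},\{3,4\},\{4,5\},\{5,6\},\{6,7\},\{2,4\}\}$, $0$ otherwise; $\Lambda=\bigoplus\mathbb{Z}\alpha_i$, $\Delta^+$ the positive roots. Let $f:\Lambda\to V$ be the homomorphism with $f(\alpha_1)=100$, $f(\alpha_2)=030$, $f(\alpha_3)=300$, $f(\alpha_4)=111$, $f(\alpha_5)=003$, $f(\alpha_6)=001$, $f(\alpha_7)=033$. Let $\Delta_7^+$ be the positive roots with nonzero $\alpha_7$-coefficient and $\Gamma_7^+=f(\Delta_7^+)$.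 *)

theory Defs
  imports Main
begin

(* F = {0,1,2,3} = Z/2 x Z/2, elements as nat, operation = bitwise xor *)
type_synonym vec = "nat \<times> nat \<times> nat"   (* V = F^3, element abc = (a,b,c) *)

definition formF :: "nat \<Rightarrow> nat \<Rightarrow> nat" where
  "formF a a' = (if a = 0 \<or> a' = 0 \<or> a = a' then 0 else 1)"

definition vxor :: "vec \<Rightarrow> vec \<Rightarrow> vec" where
  "vxor x y = (xor (fst x) (fst y), xor (fst (snd x)) (fst (snd y)), xor (snd (snd x)) (snd (snd y)))"

definition formV :: "vec \<Rightarrow> vec \<Rightarrow> nat" where
  "formV x y = (formF (fst x) (fst y) + formF (fst (snd x)) (fst (snd y))
       + formF (snd (snd x)) (snd (snd y))) mod 2"

definition e7_edge :: "nat \<Rightarrow> nat \<Rightarrow> bool" where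
  "e7_edge i j = ({i,j} \<in> {{1,3},{3,4},{4,5},{5,6},{6,7},{2,4}})"

definition cartan :: "nat \<Rightarrow> nat \<Rightarrow> int" where
  "cartan i j = (if i = j then 2 else if e7_edge i j then -1 else 0)"

(* elements of Lambda: coefficient functions supported on {1..7} *)
definition lattice :: "(nat \<Rightarrow> int) set" where
  "lattice = {c. \<forall>i. i \<notin> {1..7} \<longrightarrow> c i = 0}"

definition lform :: "(nat \<Rightarrow> int) \<Rightarrow> (nat \<Rightarrow> int) \<Rightarrow> int" where
  "lform c d = (\<Sum>i\<in>{1..7}. \<Sum>j\<in>{1..7}. c i * d j * cartan i j)"

definition roots :: "(nat \<Rightarrow> int) set" where
  "roots = {c \<in> lattice. lform c c = 2}"

definition pos_roots :: "(nat \<Rightarrow> int) set" where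
  "pos_roots = {c \<in> roots. \<forall>i. c i \<ge> 0}"

definition f_simple :: "nat \<Rightarrow> vec" where
  "f_simple i = (if i = 1 then (1,0,0) else if i = 2 then (0,3,0) else if i = 3 then (3,0,0)
     else if i = 4 then (1,1,1) else if i = 5 then (0,0,3) else if i = 6 then (0,0,1)
     else if i = 7 then (0,3,3) else (0,0,0))"

(* the homomorphism f : Lambda -> V; V has exponent 2, so f(sum c_i alpha_i) is the
   xor of f(alpha_i) over i with c_i odd *)
definition fhom :: "(nat \<Rightarrow> int) \<Rightarrow> vec" where
  "fhom c = foldr (\<lambda>i acc. if odd (c i) then vxor (f_simple i) acc else acc) [1..<8] (0,0,0)"

definition Delta7_pos :: "(nat \<Rightarrow> int) set" where
  "Delta7_pos = {c \<in> pos_roots. c 7 \<noteq> 0}"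

definition Gamma7_pos :: "vec set" where
  "Gamma7_pos = fhom ` Delta7_pos"

end

theory Submission
  imports Defs
begin

definition Qp :: "int \<Rightarrow> int \<Rightarrow> int \<Rightarrow> int \<Rightarrow> int \<Rightarrow> int \<Rightarrow> int \<Rightarrow> int" where
  "Qp a1 a2 a3 a4 a5 a6 a7 = 2*(a1^2+a2^2+a3^2+a4^2+a5^2+a6^2+a7^2)
     - 2*(a1*a3 + a3*a4 + a4*a5 + a5*a6 + a6*a7 + a2*a4)"

lemma sum7: "(\<Sum>i\<in>{1..7::nat}. g i) = g 1 + g 2 + g 3 + g 4 + g 5 + g 6 + (g 7 :: int)"
proof -
  have e: "{1..7::nat} = {1,2,3,4,5,6,7}" by auto
  show ?thesis unfolding e by (simp add: add.assoc)
qed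

lemma e7_edge_iff: "e7_edge i j \<longleftrightarrow> (i,j) \<in> {(1,3),(3,1),(3,4),(4,3),(4,5),(5,4),(5,6),(6,5),(6,7),(7,6),(2,4),(4,2)}"
  unfolding e7_edge_def by (auto simp: doubleton_eq_iff)

lemma lform_Qp: "lform c c = Qp (c 1) (c 2) (c 3) (c 4) (c 5) (c 6) (c 7)"
  unfolding lform_def sum7
  by (simp add: cartan_def e7_edge_iff Qp_def power2_eq_square algebra_simps)

lemma sos1: "4*Qp a1 a2 a3 a4 a5 a6 a7 - 1*a1^2 = 2*(2*a2 - 1*a4)^2 + 2*(-1*a1 + 2*a3 - 1*a4)^2 + 1*(-1*a1 + 2*a4 - 2*a5)^2 + 1*(-1*a1 + 2*a5 - 2*a6)^2 + 1*(-1*a1 + 2*a6 - 2*a7)^2 + 1*(-1*a1 + 2*a7)^2 + 1*(1*a1)^2"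
  unfolding Qp_def by (simp add: power2_eq_square algebra_simps)

lemma sos2: "420*Qp a1 a2 a3 a4 a5 a6 a7 - 105*a2^2 = 210*(2*a1 - 1*a3)^2 + 70*(3*a3 - 2*a4)^2 + 35*(-3*a2 + 4*a4 - 3*a5)^2 + 21*(-3*a2 + 5*a5 - 4*a6)^2 + 14*(-3*a2 + 6*a6 - 5*a7)^2 + 10*(-3*a2 + 7*a7)^2 + 15*(1*a2)^2"
  unfolding Qp_def by (simp add: power2_eq_square algebra_simps)

lemma sos3: "420*Qp a1 a2 a3 a4 a5 a6 a7 - 60*a3^2 = 210*(2*a1 - 1*a3)^2 + 210*(2*a2 - 1*a4)^2 + 70*(-2*a3 + 3*a4 - 2*a5)^2 + 35*(-2*a3 + 4*a5 - 3*a6)^2 + 21*(-2*a3 + 5*a6 - 4*a7)^2 + 56*(-1*a3 + 3*a7)^2 + 10*(1*a3)^2"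
  unfolding Qp_def by (simp add: power2_eq_square algebra_simps)

lemma sos4: "588*Qp a1 a2 a3 a4 a5 a6 a7 - 48*a4^2 = 294*(2*a1 - 1*a3)^2 + 294*(2*a2 - 1*a4)^2 + 98*(3*a3 - 2*a4)^2 + 294*(-1*a4 + 2*a5 - 1*a6)^2 + 98*(-1*a4 + 3*a6 - 2*a7)^2 + 49*(-1*a4 + 4*a7)^2 + 1*(1*a4)^2"
  unfolding Qp_def by (simp add: power2_eq_square algebra_simps)

lemma sos5: "930*Qp a1 a2 a3 a4 a5 a6 a7 - 120*a5^2 = 465*(2*a1 - 1*a3)^2 + 465*(2*a2 - 1*a4)^2 + 155*(3*a3 - 2*a4)^2 + 31*(5*a4 - 6*a5)^2 + 465*(-1*a5 + 2*a6 - 1*a7)^2 + 155*(-1*a5 + 3*a7)^2 + 4*(1*a5)^2"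
  unfolding Qp_def by (simp add: power2_eq_square algebra_simps)

lemma sos6: "1020*Qp a1 a2 a3 a4 a5 a6 a7 - 240*a6^2 = 510*(2*a1 - 1*a3)^2 + 510*(2*a2 - 1*a4)^2 + 170*(3*a3 - 2*a4)^2 + 34*(5*a4 - 6*a5)^2 + 51*(4*a5 - 5*a6)^2 + 510*(-1*a6 + 2*a7)^2 + 15*(1*a6)^2"
  unfolding Qp_def by (simp add: power2_eq_square algebra_simps)

lemma sos7: "420*Qp a1 a2 a3 a4 a5 a6 a7 - 240*a7^2 = 210*(2*a1 - 1*a3)^2 + 210*(2*a2 - 1*a4)^2 + 70*(3*a3 - 2*a4)^2 + 14*(5*a4 - 6*a5)^2 + 21*(4*a5 - 5*a6)^2 + 35*(3*a6 - 4*a7)^2 + 40*(1*a7)^2"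
  unfolding Qp_def by (simp add: power2_eq_square algebra_simps)

lemma sqbound:
  fixes x N D b :: int
  assumes "D*x^2 \<le> N" "0 \<le> x" "N < D*(b+1)^2" "0 < D" "0 \<le> b"
  shows "x \<le> b"
proof (rule ccontr)
  assume "\<not> x \<le> b"
  then have "b+1 \<le> x" by simp
  then have "(b+1)^2 \<le> x^2" by (rule power_mono) (use assms in simp)
  then have "D*(b+1)^2 \<le> D*x^2" using assms(4) by simp
  then show False using assms(1,3) by linarith
qed

lemma bounds:
  assumes "Qp a1 a2 a3 a4 a5 a6 a7 = 2" "0\<le>a1" "0\<le>a2" "0\<le>a3" "0\<le>a4" "0\<le>a5" "0\<le>a6" "0\<le>a7"
  shows "a1 \<le> 2 \<and> a2 \<le> 2 \<and> a3 \<le> 3 \<and> a4 \<le> 4 \<and> a5 \<le> 3 \<and> a6 \<le> 2 \<and> a7 \<le> 1"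
proof -
  have "0 \<le> 4*Qp a1 a2 a3 a4 a5 a6 a7 - 1*a1^2" unfolding sos1
    by (intro add_nonneg_nonneg mult_nonneg_nonneg) simp_all
  then have "1*a1^2 \<le> 8" using assms(1) by simp
  then have b1: "a1 \<le> 2" by (rule sqbound[where D=1 and N=8]) (use assms in simp_all)
  have "0 \<le> 420*Qp a1 a2 a3 a4 a5 a6 a7 - 105*a2^2" unfolding sos2
    by (intro add_nonneg_nonneg mult_nonneg_nonneg) simp_all
  then have "105*a2^2 \<le> 840" using assms(1) by simp
  then have b2: "a2 \<le> 2" by (rule sqbound[where D=105 and N=840]) (use assms in simp_all)
  have "0 \<le> 420*Qp a1 a2 a3 a4 a5 a6 a7 - 60*a3^2" unfolding sos3
    by (intro add_nonneg_nonneg mult_nonneg_nonneg) simp_all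
  then have "60*a3^2 \<le> 840" using assms(1) by simp
  then have b3: "a3 \<le> 3" by (rule sqbound[where D=60 and N=840]) (use assms in simp_all)
  have "0 \<le> 588*Qp a1 a2 a3 a4 a5 a6 a7 - 48*a4^2" unfolding sos4
    by (intro add_nonneg_nonneg mult_nonneg_nonneg) simp_all
  then have "48*a4^2 \<le> 1176" using assms(1) by simp
  then have b4: "a4 \<le> 4" by (rule sqbound[where D=48 and N=1176]) (use assms in simp_all)
  have "0 \<le> 930*Qp a1 a2 a3 a4 a5 a6 a7 - 120*a5^2" unfolding sos5
    by (intro add_nonneg_nonneg mult_nonneg_nonneg) simp_all
  then have "120*a5^2 \<le> 1860" using assms(1) by simp
  then have b5: "a5 \<le> 3" by (rule sqbound[where D=120 and N=1860]) (use assms in simp_all)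
  have "0 \<le> 1020*Qp a1 a2 a3 a4 a5 a6 a7 - 240*a6^2" unfolding sos6
    by (intro add_nonneg_nonneg mult_nonneg_nonneg) simp_all
  then have "240*a6^2 \<le> 2040" using assms(1) by simp
  then have b6: "a6 \<le> 2" by (rule sqbound[where D=240 and N=2040]) (use assms in simp_all)
  have "0 \<le> 420*Qp a1 a2 a3 a4 a5 a6 a7 - 240*a7^2" unfolding sos7
    by (intro add_nonneg_nonneg mult_nonneg_nonneg) simp_all
  then have "240*a7^2 \<le> 840" using assms(1) by simp
  then have b7: "a7 \<le> 1" by (rule sqbound[where D=240 and N=840]) (use assms in simp_all)
  show ?thesis using b1 b2 b3 b4 b5 b6 b7 by simp
qed

definition R :: "int list list" where
  "R = [[0,0,0,0,0,0,1],
   [0,0,0,0,0,1,1],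
   [0,0,0,0,1,1,1],
   [0,0,0,1,1,1,1],
   [0,0,1,1,1,1,1],
   [0,1,0,1,1,1,1],
   [0,1,1,1,1,1,1],
   [0,1,1,2,1,1,1],
   [0,1,1,2,2,1,1],
   [0,1,1,2,2,2,1],
   [1,0,1,1,1,1,1],
   [1,1,1,1,1,1,1],
   [1,1,1,2,1,1,1],
   [1,1,1,2,2,1,1],
   [1,1,1,2,2,2,1],
   [1,1,2,2,1,1,1],
   [1,1,2,2,2,1,1],
   [1,1,2,2,2,2,1],
   [1,1,2,3,2,1,1],
   [1,1,2,3,2,2,1],
   [1,1,2,3,3,2,1],
   [1,2,2,3,2,1,1],
   [1,2,2,3,2,2,1],
   [1,2,2,3,3,2,1],
   [1,2,2,4,3,2,1],
   [1,2,3,4,3,2,1],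
   [2,2,3,4,3,2,1]]"

definition mk :: "int list \<Rightarrow> nat \<Rightarrow> int" where
  "mk xs i = (if 1 \<le> i \<and> i \<le> 7 then xs ! (i-1) else 0)"

lemma enum: "\<forall>a1\<in>set [0..2]. \<forall>a2\<in>set [0..2]. \<forall>a3\<in>set [0..3]. \<forall>a4\<in>set [0..4].
  \<forall>a5\<in>set [0..3]. \<forall>a6\<in>set [0..2]. Qp a1 a2 a3 a4 a5 a6 1 = 2 \<longrightarrow> [a1,a2,a3,a4,a5,a6,1] \<in> set R"
  by code_simp

lemma Rcheck: "\<forall>xs\<in>set R. length xs = 7 \<and> Qp (xs!0) (xs!1) (xs!2) (xs!3) (xs!4) (xs!5) (xs!6) = 2
   \<and> (\<forall>x\<in>set xs. 0 \<le> x) \<and> xs!6 \<noteq> 0"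
  by code_simp

definition L :: "vec list" where "L = map (fhom \<circ> mk) R"

lemma Lcheck: "\<forall>x1\<in>set L. \<forall>x2\<in>set L. x1 \<noteq> x2 \<longrightarrow>
   (formV x1 x2 = 0 \<longrightarrow> (\<exists>x3\<in>set L. x3 \<noteq> x1 \<and> x3 \<noteq> x2 \<and> formV x1 x3 = 0 \<and> formV x2 x3 = 0
      \<and> vxor (vxor x1 x2) x3 = (0,0,0)
      \<and> (\<forall>y\<in>set L. y \<noteq> x1 \<and> y \<noteq> x2 \<and> formV x1 y = 0 \<and> formV x2 y = 0 \<longrightarrow> y = x3)))
   \<and> (vxor x1 x2 \<in> set L \<longrightarrow> formV x1 x2 = 0)"
  by code_simp

lemma Delta_sub:
  assumes "c \<in> Delta7_pos"
  shows "\<exists>xs\<in>set R. c = mk xs"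
proof -
  have lat: "\<And>i. i \<notin> {1..7} \<Longrightarrow> c i = 0" and Q: "Qp (c 1) (c 2) (c 3) (c 4) (c 5) (c 6) (c 7) = 2"
    and nn: "\<And>i. 0 \<le> c i" and c7: "c 7 \<noteq> 0"
    using assms by (auto simp: Delta7_pos_def pos_roots_def roots_def lattice_def lform_Qp)
  have bd: "c 1 \<le> 2 \<and> c 2 \<le> 2 \<and> c 3 \<le> 3 \<and> c 4 \<le> 4 \<and> c 5 \<le> 3 \<and> c 6 \<le> 2 \<and> c 7 \<le> 1"
    by (rule bounds[OF Q nn nn nn nn nn nn nn])
  have c71: "c 7 = 1" using bd c7 nn[of 7] by simp
  have h1: "c 1 \<in> set [0..2]" "c 2 \<in> set [0..2]" "c 3 \<in> set [0..3]" "c 4 \<in> set [0..4]"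
    "c 5 \<in> set [0..3]" "c 6 \<in> set [0..2]" using bd nn by auto
  have Q1: "Qp (c 1) (c 2) (c 3) (c 4) (c 5) (c 6) 1 = 2" using Q c71 by simp
  have mem: "[c 1, c 2, c 3, c 4, c 5, c 6, 1] \<in> set R" using enum h1 Q1 by blast
  have "c = mk [c 1, c 2, c 3, c 4, c 5, c 6, 1]"
  proof
    fix i
    show "c i = mk [c 1, c 2, c 3, c 4, c 5, c 6, 1] i"
    proof (cases "i \<in> {1..7}")
      case True
      then have "i = 1 \<or> i = 2 \<or> i = 3 \<or> i = 4 \<or> i = 5 \<or> i = 6 \<or> i = 7" by auto
      then show ?thesis using c71 by (auto simp: mk_def)
    next
      case False
      then show ?thesis using lat by (auto simp: mk_def)
    qed
  qed
  then show ?thesis using mem by blast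
qed

lemma R_sub:
  assumes "xs \<in> set R"
  shows "mk xs \<in> Delta7_pos"
proof -
  have h: "length xs = 7" "Qp (xs!0) (xs!1) (xs!2) (xs!3) (xs!4) (xs!5) (xs!6) = 2"
    "\<forall>x\<in>set xs. 0 \<le> x" "xs!6 \<noteq> 0"
    using Rcheck assms by auto
  have "mk xs \<in> lattice" by (auto simp: lattice_def mk_def)
  moreover have "lform (mk xs) (mk xs) = 2" using h(2) by (simp add: lform_Qp mk_def)
  moreover have "\<forall>i. 0 \<le> mk xs i"
  proof
    fix i
    show "0 \<le> mk xs i"
    proof (cases "1 \<le> i \<and> i \<le> 7")
      case True
      then have "i - 1 < length xs" using h(1) by auto
      then have "xs ! (i-1) \<in> set xs" by (rule nth_mem)
      then show ?thesis using True h(3) by (simp add: mk_def)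
    qed (auto simp: mk_def)
  qed
  moreover have "mk xs 7 \<noteq> 0" using h(4) by (simp add: mk_def)
  ultimately show ?thesis by (simp add: Delta7_pos_def pos_roots_def roots_def)
qed

lemma Gamma_eq: "Gamma7_pos = set L"
proof
  show "Gamma7_pos \<subseteq> set L"
  proof
    fix x assume "x \<in> Gamma7_pos"
    then obtain c where c: "c \<in> Delta7_pos" "x = fhom c" by (auto simp: Gamma7_pos_def)
    then obtain xs where "xs \<in> set R" "c = mk xs" using Delta_sub by blast
    then show "x \<in> set L" using c by (auto simp: L_def)
  qed
  show "set L \<subseteq> Gamma7_pos" unfolding L_def Gamma7_pos_def using R_sub by auto
qed

theorem mainTheorem9:
  assumes "x1 \<in> Gamma7_pos" and "x2 \<in> Gamma7_pos" and "x1 \<noteq> x2"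
  shows "(formV x1 x2 = 0 \<longrightarrow>
           (\<exists>x3. x3 \<in> Gamma7_pos - {x1, x2} \<and> formV x1 x3 = 0 \<and> formV x2 x3 = 0
              \<and> vxor (vxor x1 x2) x3 = (0,0,0)
              \<and> (\<forall>y. y \<in> Gamma7_pos - {x1, x2} \<and> formV x1 y = 0 \<and> formV x2 y = 0 \<longrightarrow> y = x3)))
       \<and> (vxor x1 x2 \<in> Gamma7_pos \<longrightarrow> formV x1 x2 = 0)"
proof -
  have a: "x1 \<in> set L" "x2 \<in> set L" using assms(1,2) Gamma_eq by auto
  have "(formV x1 x2 = 0 \<longrightarrow> (\<exists>x3\<in>set L. x3 \<noteq> x1 \<and> x3 \<noteq> x2 \<and> formV x1 x3 = 0 \<and> formV x2 x3 = 0
      \<and> vxor (vxor x1 x2) x3 = (0,0,0)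
      \<and> (\<forall>y\<in>set L. y \<noteq> x1 \<and> y \<noteq> x2 \<and> formV x1 y = 0 \<and> formV x2 y = 0 \<longrightarrow> y = x3)))
   \<and> (vxor x1 x2 \<in> set L \<longrightarrow> formV x1 x2 = 0)"
    using Lcheck a assms(3) by blast
  then show ?thesis unfolding Gamma_eq by blast
qed

end
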